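(* Let $N\in\mathbb{N}$ with $N\ge3$ and $\phi(x):=\cot\left(\frac{\pi}{2}\left(\frac{x}{\sqrt6}+\frac12\right)\right)$. There is an odd polynomial $P_{\mathrm{odd}}$ such that for all real $x$ with $|x|\le\frac12$, \[ \left|\phi(x)-\sum_{m=0}^{N+1}\frac{\phi^{(2m)}(0)}{(2m)!}x^{2m}-P_{\mathrm{odd}}(x)\right|\le 2.3\left(\frac23\right)^{N+2}x^{2N+4}. \] *)

theory Defs
  imports "HOL-Analysis.Analysis" "HOL-Computational_Algebra.Polynomial"
begin

definition phi :: "real \<Rightarrow> real" where
  "phi x = cot (pi / 2 * (x / sqrt 6 + 1 / 2))"

definition odd_poly :: "real poly \<Rightarrow> bool" where
  "odd_poly P \<longleftrightarrow> (\<forall>k. even k \<longrightarrow> coeff P k = 0)"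

end

theory Submission
  imports Defs
begin

lemma digamma_reflection_complex:
  fixes z :: complex
  assumes "z \<notin> \<int>"
  shows "Digamma (1 - z) - Digamma z = of_real pi * cot (of_real pi * z)"
proof -
  let ?g = "\<lambda>t::complex. Gamma t * Gamma (1 - t) * sin (of_real pi * t)"
  have z1: "1 - z \<notin> \<int>" using assms Ints_diff[of 1 "1 - z"] by auto
  have np: "z \<notin> \<int>\<^sub>\<le>\<^sub>0" "1 - z \<notin> \<int>\<^sub>\<le>\<^sub>0" using assms z1 nonpos_Ints_subset_Ints by auto
  have sin_nz: "sin (of_real pi * z) \<noteq> 0" using assms by (subst sin_eq_0) auto
  have d1: "(?g has_field_derivative
      (Gamma z * Digamma z * Gamma (1 - z) * sin (of_real pi * z)
       - Gamma z * (Gamma (1 - z) * Digamma (1 - z)) * sin (of_real pi * z)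
       + Gamma z * Gamma (1 - z) * (cos (of_real pi * z) * of_real pi))) (at z)"
    using np by (auto intro!: derivative_eq_intros simp: algebra_simps)
  have "open (UNIV - \<int> :: complex set)" by (simp add: open_Diff)
  have eq: "?g t = of_real pi" if "t \<in> UNIV - \<int>" for t
  proof -
    have "sin (of_real pi * t) \<noteq> 0" using that by (subst sin_eq_0) auto
    thus ?thesis using Gamma_reflection_complex[of t] by (simp add: field_simps)
  qed
  have d2: "((\<lambda>t. of_real pi :: complex) has_field_derivative
      (Gamma z * Digamma z * Gamma (1 - z) * sin (of_real pi * z)
       - Gamma z * (Gamma (1 - z) * Digamma (1 - z)) * sin (of_real pi * z)
       + Gamma z * Gamma (1 - z) * (cos (of_real pi * z) * of_real pi))) (at z)"
    by (rule has_field_derivative_transform_within_open[OF d1 \<open>open _\<close>]) (use assms eq in auto)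
  have "((\<lambda>t. of_real pi :: complex) has_field_derivative 0) (at z)" by simp
  from DERIV_unique[OF d2 this] have "Gamma z * Gamma (1 - z) * ((Digamma z - Digamma (1 - z)) * sin (of_real pi * z)
       + cos (of_real pi * z) * of_real pi) = 0"
    by (simp add: algebra_simps)
  moreover have "Gamma z \<noteq> 0" "Gamma (1 - z) \<noteq> 0" using np by (auto simp: Gamma_eq_zero_iff)
  ultimately have "(Digamma z - Digamma (1 - z)) * sin (of_real pi * z) + cos (of_real pi * z) * of_real pi = 0"
    by simp
  thus ?thesis using sin_nz by (simp add: cot_def field_simps)
qed

lemma digamma_reflection_real:
  fixes u :: real
  assumes "0 < u" "u < 1"
  shows "Digamma (1 - u) - Digamma u = pi * cot (pi * u)"
proof -
  have nI: "complex_of_real u \<notin> \<int>"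
  proof
    assume "complex_of_real u \<in> \<int>"
    then obtain k where "complex_of_real u = of_int k" by (auto elim: Ints_cases)
    hence "u = of_int k" by (metis of_real_eq_iff of_real_of_int_eq)
    with assms show False by (cases "k \<le> 0") auto
  qed
  have e1: "Digamma (complex_of_real (1 - u)) = of_real (Digamma (1 - u))"
    using assms by (intro Polygamma_of_real) auto
  have e2: "Digamma (complex_of_real u) = of_real (Digamma u)"
    using assms by (intro Polygamma_of_real) auto
  have "complex_of_real (Digamma (1 - u) - Digamma u) = Digamma (1 - of_real u) - Digamma (of_real u)"
    using e1 e2 by simp
  also have "\<dots> = of_real pi * cot (of_real pi * of_real u)"
    by (rule digamma_reflection_complex[OF nI])
  also have "\<dots> = complex_of_real (pi * cot (pi * u))"
    by (simp add: cot_of_real)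
  finally show ?thesis by (simp only: of_real_eq_iff)
qed

definition rho :: real where "rho = 1 / (2 * sqrt 6)"

lemma sqrt6_bounds: "2449/1000 < sqrt 6" "sqrt 6 < 24495/10000"
proof -
  show "2449/1000 < sqrt 6" by (rule real_less_rsqrt) (simp add: power2_eq_square)
  have "sqrt 6 < sqrt ((24495/10000)^2)" by (subst real_sqrt_less_iff) (simp add: power2_eq_square)
  then show "sqrt 6 < 24495/10000" by simp
qed

lemma rho_bounds: "2041/10000 < rho" "rho < 20417/100000"
  using sqrt6_bounds unfolding rho_def by (simp_all add: field_simps)

definition G :: "nat \<Rightarrow> real \<Rightarrow> real" where
  "G n x = rho ^ n / pi * ((-1) ^ n * Polygamma n (3/4 - rho * x) - Polygamma n (1/4 + rho * x))"

lemma args_pos: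
  assumes "\<bar>x\<bar> < 1"
  shows "0 < 1/4 + rho * x" "0 < 3/4 - rho * x"
proof -
  have r0: "rho > 0" using rho_bounds by simp
  have "rho * \<bar>x\<bar> < rho * 1" using r0 assms by (intro mult_strict_left_mono) auto
  moreover have "\<bar>rho * x\<bar> = rho * \<bar>x\<bar>" using r0 by (simp add: abs_mult)
  ultimately have "\<bar>rho * x\<bar> < 1/4" using rho_bounds by linarith
  thus "0 < 1/4 + rho * x" "0 < 3/4 - rho * x" by auto
qed

lemma G_deriv:
  assumes "\<bar>x\<bar> < 1"
  shows "(G n has_real_derivative G (Suc n) x) (at x)"
proof -
  have np: "(3/4 - rho * x) \<notin> \<int>\<^sub>\<le>\<^sub>0" "(1/4 + rho * x) \<notin> \<int>\<^sub>\<le>\<^sub>0"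
    using args_pos[OF assms] by (auto elim!: nonpos_Ints_cases)
  show ?thesis unfolding G_def[abs_def]
    using np by (auto intro!: derivative_eq_intros simp: algebra_simps)
qed

lemma phi_G0:
  assumes "\<bar>x\<bar> < 1"
  shows "phi x = G 0 x"
proof -
  have u: "0 < 1/4 + rho * x" "1/4 + rho * x < 1" using args_pos[OF assms] by auto
  have "G 0 x = (Digamma (1 - (1/4 + rho * x)) - Digamma (1/4 + rho * x)) / pi"
    by (simp add: G_def)
  also have "\<dots> = cot (pi * (1/4 + rho * x))"
    using digamma_reflection_real[OF u] by simp
  also have "pi * (1/4 + rho * x) = pi / 2 * (x / sqrt 6 + 1 / 2)"
    by (simp add: rho_def field_simps)
  finally show ?thesis by (simp add: phi_def)
qed

lemma deriv_phi:
  assumes "\<bar>x\<bar> < 1"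
  shows "(deriv ^^ n) phi x = G n x"
  using assms
proof (induction n arbitrary: x)
  case 0
  then show ?case by (simp add: phi_G0)
next
  case (Suc n)
  have op: "open {y::real. \<bar>y\<bar> < 1}" by (intro open_Collect_less continuous_intros)
  have "((deriv ^^ n) phi has_real_derivative G (Suc n) x) (at x)"
    by (rule has_field_derivative_transform_within_open[OF G_deriv[OF Suc.prems] op])
       (use Suc in auto)
  hence "deriv ((deriv ^^ n) phi) x = G (Suc n) x" by (rule DERIV_imp_deriv)
  thus ?case by simp
qed

lemma hz_bound:
  fixes q :: real
  assumes q: "q > 0"
  shows "(\<Sum>k. inverse ((q + of_nat k) ^ Suc (Suc m))) \<le> inverse (q ^ Suc (Suc m)) + inverse (q ^ Suc m)"
proof -
  define f where "f k = inverse ((q + of_nat k) ^ Suc (Suc m))" for k :: nat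
  have sf: "summable f" unfolding f_def using q by (intro Polygamma_converges') auto
  define h where "h k = inverse (q ^ m) * inverse (q + of_nat k)" for k :: nat
  have hlim: "h \<longlonglongrightarrow> 0"
    unfolding h_def by (intro tendsto_mult_right_zero tendsto_inverse_0_at_top filterlim_tendsto_add_at_top[OF tendsto_const] filterlim_real_sequentially)
  have tel: "(\<lambda>k. h k - h (Suc k)) sums (h 0 - 0)" by (rule telescope_sums'[OF hlim])
  have le: "f (Suc k) \<le> h k - h (Suc k)" for k
  proof -
    define a where "a = q + of_nat k"
    have a: "a \<ge> q" "a > 0" using q by (auto simp: a_def)
    have "h k - h (Suc k) = inverse (q ^ m) * (inverse a - inverse (a + 1))"
      by (simp add: h_def a_def algebra_simps)
    also have "inverse a - inverse (a + 1) = inverse (a * (a + 1))"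
      using a by (simp add: field_simps)
    also have "inverse (q ^ m) * inverse (a * (a + 1)) = inverse (q ^ m * (a * (a + 1)))"
      by (simp add: inverse_mult_distrib)
    finally have eq: "h k - h (Suc k) = inverse (q ^ m * (a * (a + 1)))" .
    have "q ^ m * (a * (a + 1)) \<le> (a + 1) ^ m * ((a + 1) * (a + 1))"
      using a q by (intro mult_mono power_mono) auto
    also have "\<dots> = (q + of_nat (Suc k)) ^ Suc (Suc m)" by (simp add: a_def algebra_simps)
    finally have "inverse ((q + of_nat (Suc k)) ^ Suc (Suc m)) \<le> inverse (q ^ m * (a * (a + 1)))"
      using a q by (intro le_imp_inverse_le) auto
    thus ?thesis using eq by (simp add: f_def)
  qed
  have "(\<Sum>k. f (Suc k)) \<le> (\<Sum>k. h k - h (Suc k))"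
    using le sf tel by (intro suminf_le) (auto simp: summable_Suc_iff sums_summable)
  also have "\<dots> = h 0" using tel by (simp add: sums_iff)
  finally have "suminf f - f 0 \<le> h 0" using suminf_split_head[OF sf] by simp
  moreover have "h 0 = inverse (q ^ Suc m)" by (simp add: h_def)
  moreover have "f 0 = inverse (q ^ Suc (Suc m))" by (simp add: f_def)
  ultimately show ?thesis unfolding f_def by simp
qed

lemma polygamma_bound:
  fixes q :: real
  assumes q: "q > 0" and n: "n \<ge> 1"
  shows "\<bar>Polygamma n q\<bar> \<le> fact n * (inverse (q ^ Suc n) + inverse (q ^ n))"
proof -
  obtain m where m: "n = Suc m" using n by (cases n) auto
  have nn: "0 \<le> (\<Sum>k. inverse ((q + of_nat k) ^ Suc n))"
    using q n by (intro suminf_nonneg Polygamma_converges') auto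
  have "\<bar>Polygamma n q\<bar> = fact n * (\<Sum>k. inverse ((q + of_nat k) ^ Suc n))"
    using n nn by (simp add: Polygamma_def abs_mult)
  also have "\<dots> \<le> fact n * (inverse (q ^ Suc n) + inverse (q ^ n))"
    using hz_bound[OF q, of m] m by (intro mult_left_mono) auto
  finally show ?thesis .
qed

lemma pi_lb: "pi > 31415/10000"
  using pi_approx by simp

lemma rho_pos: "rho > 0" using rho_bounds by simp

lemma four_rho_sq: "(4 * rho) ^ 2 = 2 / 3"
  by (simp add: rho_def power2_eq_square field_simps)

lemma coef_bound:
  assumes n: "n \<ge> 10"
  shows "\<bar>G n 0\<bar> / fact n \<le> (1592/1000) * (4 * rho) ^ n"
proof -
  have n1: "n \<ge> 1" using n by simp
  have A: "\<bar>Polygamma n (3/4::real)\<bar> \<le> fact n * (inverse ((3/4) ^ Suc n) + inverse ((3/4) ^ n))"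
    by (rule polygamma_bound[OF _ n1]) simp
  have B: "\<bar>Polygamma n (1/4::real)\<bar> \<le> fact n * (inverse ((1/4) ^ Suc n) + inverse ((1/4) ^ n))"
    by (rule polygamma_bound[OF _ n1]) simp
  have "\<bar>G n 0\<bar> \<le> rho ^ n / pi * (\<bar>Polygamma n (3/4::real)\<bar> + \<bar>Polygamma n (1/4::real)\<bar>)"
  proof -
    have tri: "\<bar>(-1)^n * a - b\<bar> \<le> \<bar>a\<bar> + \<bar>b\<bar>" for a b :: real
      using abs_triangle_ineq4[of "(-1)^n * a" b] by (simp add: abs_mult power_abs)
    have "\<bar>G n 0\<bar> = rho ^ n / pi * \<bar>(-1)^n * Polygamma n (3/4::real) - Polygamma n (1/4)\<bar>"
      unfolding G_def using rho_pos by (simp add: abs_mult)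
    also have "\<dots> \<le> rho ^ n / pi * (\<bar>Polygamma n (3/4::real)\<bar> + \<bar>Polygamma n (1/4::real)\<bar>)"
      using rho_pos by (intro mult_left_mono tri) auto
    finally show ?thesis .
  qed
  also have "\<dots> \<le> rho ^ n / pi * (fact n * ((7/3) * (4/3) ^ n + 5 * 4 ^ n))"
  proof -
    have e1: "inverse ((3/4::real) ^ Suc n) + inverse ((3/4) ^ n) = (7/3) * (4/3) ^ n"
      by (simp add: power_inverse[symmetric] field_simps)
    have e2: "inverse ((1/4::real) ^ Suc n) + inverse ((1/4) ^ n) = 5 * 4 ^ n"
      by (simp add: power_inverse[symmetric] field_simps)
    have A': "\<bar>Polygamma n (3/4::real)\<bar> \<le> fact n * ((7/3) * (4/3) ^ n)"
      using A unfolding e1 .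
    have B': "\<bar>Polygamma n (1/4::real)\<bar> \<le> fact n * (5 * 4 ^ n)"
      using B unfolding e2 .
    show ?thesis using A' B' rho_pos
      by (intro mult_left_mono) (auto simp: algebra_simps)
  qed
  also have "(7/3) * (4/3::real) ^ n = (7/3) * (1/3) ^ n * 4 ^ n"
    by (simp add: power_mult_distrib[symmetric])
  also have "(7/3) * (1/3::real) ^ n \<le> 1/10000"
  proof -
    have "(1/3::real) ^ n \<le> (1/3) ^ 10" using n by (intro power_decreasing) auto
    moreover have "(1/3::real) ^ 10 = 1/59049" by (simp add: power_divide)
    ultimately show ?thesis by linarith
  qed
  hence "rho ^ n / pi * (fact n * ((7/3) * (1/3::real) ^ n * 4 ^ n + 5 * 4 ^ n)) \<le>
         rho ^ n / pi * (fact n * ((50001/10000) * 4 ^ n))"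
    using rho_pos pi_gt_zero by (intro mult_left_mono) (auto simp: algebra_simps intro!: mult_right_mono)
  finally have "\<bar>G n 0\<bar> / fact n \<le> ((50001/10000) / pi) * (4 * rho) ^ n"
    by (simp add: field_simps power_mult_distrib)
  also have "\<dots> \<le> (1592/1000) * (4 * rho) ^ n"
    using pi_lb rho_pos by (intro mult_right_mono) (auto simp: field_simps)
  finally show ?thesis .
qed

lemma lag_bound:
  assumes tx: "\<bar>t\<bar> \<le> \<bar>x\<bar>" and x: "\<bar>x\<bar> \<le> 1/2" and M: "M \<ge> 1"
  shows "\<bar>G M t\<bar> / fact M * \<bar>x\<bar> ^ M \<le> 5 * ((4 * rho * \<bar>x\<bar>) / (1 - 4 * rho * \<bar>x\<bar>)) ^ M"
proof -
  define w where "w = 1/4 - rho * \<bar>x\<bar>"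
  have rx: "rho * \<bar>x\<bar> \<le> rho * (1/2)" using rho_pos x by (intro mult_left_mono) auto
  have w0: "w \<ge> 1479/10000" using rx rho_bounds unfolding w_def by linarith
  have wpos: "w > 0" using w0 by simp
  have rt: "\<bar>rho * t\<bar> \<le> rho * \<bar>x\<bar>" using rho_pos tx by (simp add: abs_mult)
  have q1: "1/4 + rho * t \<ge> w" using rt by (simp add: w_def abs_le_iff)
  have q2: "3/4 - rho * t \<ge> w" using rt by (simp add: w_def abs_le_iff)
  have pb: "\<bar>Polygamma M q\<bar> \<le> fact M * (inverse (w ^ Suc M) + inverse (w ^ M))" if q: "q \<ge> w" for q
  proof -
    have "\<bar>Polygamma M q\<bar> \<le> fact M * (inverse (q ^ Suc M) + inverse (q ^ M))"
      using polygamma_bound[OF _ M, of q] q wpos by simp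
    also have "\<dots> \<le> fact M * (inverse (w ^ Suc M) + inverse (w ^ M))"
      using q wpos by (intro mult_left_mono add_mono le_imp_inverse_le power_mono) auto
    finally show ?thesis .
  qed
  have tri: "\<bar>(-1)^M * a - b\<bar> \<le> \<bar>a\<bar> + \<bar>b\<bar>" for a b :: real
    using abs_triangle_ineq4[of "(-1)^M * a" b] by (simp add: abs_mult power_abs)
  have "\<bar>G M t\<bar> = rho ^ M / pi * \<bar>(-1)^M * Polygamma M (3/4 - rho * t) - Polygamma M (1/4 + rho * t)\<bar>"
    unfolding G_def using rho_pos by (simp add: abs_mult)
  also have "\<dots> \<le> rho ^ M / pi * (\<bar>Polygamma M (3/4 - rho * t)\<bar> + \<bar>Polygamma M (1/4 + rho * t)\<bar>)"
    using rho_pos by (intro mult_left_mono tri) auto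
  also have "\<dots> \<le> rho ^ M / pi * (2 * (fact M * (inverse (w ^ Suc M) + inverse (w ^ M))))"
    using pb[OF q1] pb[OF q2] rho_pos by (intro mult_left_mono) auto
  finally have "\<bar>G M t\<bar> / fact M * \<bar>x\<bar> ^ M \<le>
      rho ^ M / pi * (2 * (fact M * (inverse (w ^ Suc M) + inverse (w ^ M)))) / fact M * \<bar>x\<bar> ^ M"
    by (intro mult_right_mono divide_right_mono) auto
  also have "\<dots> = (2 / pi) * (inverse w + 1) * ((rho * \<bar>x\<bar>) / w) ^ M"
    using wpos by (simp add: field_simps power_mult_distrib power_divide)
  also have "(rho * \<bar>x\<bar>) / w = (4 * rho * \<bar>x\<bar>) / (1 - 4 * rho * \<bar>x\<bar>)"
    by (simp add: w_def field_simps)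
  finally have L: "\<bar>G M t\<bar> / fact M * \<bar>x\<bar> ^ M \<le> (2 / pi) * (inverse w + 1) * ((4 * rho * \<bar>x\<bar>) / (1 - 4 * rho * \<bar>x\<bar>)) ^ M" .
  have Cb: "(2 / pi) * (inverse w + 1) \<le> 5"
  proof -
    have "inverse w \<le> inverse (1479/10000)" using w0 by (intro le_imp_inverse_le) auto
    hence "inverse w + 1 \<le> 11479/1479" by simp
    moreover have "2 / pi \<le> 2 / (31415/10000)" using pi_lb by (intro divide_left_mono) auto
    ultimately have "(2 / pi) * (inverse w + 1) \<le> (2 / (31415/10000)) * (11479/1479)"
      using wpos by (intro mult_mono) auto
    moreover have "(2 / (31415/10000)) * (11479/1479::real) \<le> 5" by simp
    ultimately show ?thesis by (rule order_trans)
  qed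
  have Qn: "0 \<le> ((4 * rho * \<bar>x\<bar>) / (1 - 4 * rho * \<bar>x\<bar>)) ^ M"
  proof -
    have "4 * rho * \<bar>x\<bar> \<le> 1" using w0 unfolding w_def by linarith
    thus ?thesis using rho_pos by (intro zero_le_power divide_nonneg_nonneg) auto
  qed
  show ?thesis using order_trans[OF L mult_right_mono[OF Cb Qn]] .
qed

lemma phi_hd:
  assumes "\<bar>t\<bar> < 1"
  shows "((deriv ^^ m) phi has_real_derivative (deriv ^^ Suc m) phi t) (at t)"
proof -
  have op: "open {y::real. \<bar>y\<bar> < 1}" by (intro open_Collect_less continuous_intros)
  have "((deriv ^^ m) phi has_real_derivative G (Suc m) t) (at t)"
    by (rule has_field_derivative_transform_within_open[OF G_deriv[OF assms] op])
       (use assms deriv_phi in auto)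
  thus ?thesis using deriv_phi[OF assms, of "Suc m"] by simp
qed

lemma sum_even_odd:
  "(\<Sum>n<2*k. f n) = (\<Sum>m<k. f (2*m)) + (\<Sum>m<k. f (2*m+1))"
  for f :: "nat \<Rightarrow> real"
  by (induction k) (auto simp: algebra_simps)

lemma geom_bound:
  fixes w :: real
  assumes "0 \<le> w" "w < 1"
  shows "(\<Sum>m\<in>{a..<b}. w ^ m) \<le> w ^ a / (1 - w)"
proof (cases "a < b")
  case True
  have "{a..<b} = {a..b-1}" using True by auto
  hence "(1 - w) * (\<Sum>m\<in>{a..<b}. w ^ m) = w ^ a - w ^ Suc (b - 1)"
    using True by (simp add: sum_gp_multiplied)
  also have "\<dots> \<le> w ^ a" using assms by simp
  finally show ?thesis using assms by (simp add: field_simps)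
next
  case False
  thus ?thesis using assms by simp
qed

lemma Q_bound:
  fixes z :: real
  assumes z: "0 \<le> z" "z \<le> 40834/100000" and K: "K \<ge> 10"
  shows "(z / (1 - z)) ^ (4 * K) \<le> (31/10000) * z ^ K"
proof -
  have E: "(z / (1 - z)) ^ (4 * K) = z ^ K * (z ^ 3 / (1 - z) ^ 4) ^ K"
    using z by (simp add: power_divide power_mult[symmetric] power_add[symmetric] algebra_simps)
  have b: "z ^ 3 / (1 - z) ^ 4 \<le> 56/100"
  proof -
    have "z ^ 3 \<le> (40834/100000) ^ 3" using z by (intro power_mono) auto
    moreover have "(1 - 40834/100000) ^ 4 \<le> (1 - z) ^ 4" using z by (intro power_mono) auto
    moreover have "(40834/100000::real) ^ 3 \<le> 56/100 * (1 - 40834/100000) ^ 4" by (simp add: power_divide)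
    ultimately have "z ^ 3 \<le> 56/100 * (1 - z) ^ 4" by linarith
    thus ?thesis using z by (simp add: field_simps)
  qed
  have b0: "0 \<le> z ^ 3 / (1 - z) ^ 4" using z by simp
  have "(z ^ 3 / (1 - z) ^ 4) ^ K \<le> (56/100) ^ K" using b b0 by (intro power_mono) auto
  also have "(56/100::real) ^ K \<le> (56/100) ^ 10" using K by (intro power_decreasing) auto
  also have "(56/100::real) ^ 10 \<le> 31/10000" by (simp add: power_divide)
  finally have "(z ^ 3 / (1 - z) ^ 4) ^ K \<le> 31/10000" .
  hence "z ^ K * (z ^ 3 / (1 - z) ^ 4) ^ K \<le> z ^ K * (31/10000)" using z by (intro mult_left_mono) auto
  thus ?thesis unfolding E by (simp add: mult.commute)
qed

theorem lemma3p4: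
  fixes N :: nat
  assumes "N \<ge> 3"
  shows "\<exists>P. odd_poly P \<and>
    (\<forall>x::real. \<bar>x\<bar> \<le> 1/2 \<longrightarrow>
      \<bar>phi x - (\<Sum>m = 0..N+1. (deriv ^^ (2*m)) phi 0 / fact (2*m) * x ^ (2*m)) - poly P x\<bar>
        \<le> 2.3 * (2/3) ^ (N+2) * x ^ (2*N+4))"
proof -
  define c where "c n = (deriv ^^ n) phi 0 / fact n" for n
  define K where "K = 2 * N + 4"
  define Mh where "Mh = 2 * K"
  define M where "M = 2 * Mh"
  have K10: "K \<ge> 10" using assms by (simp add: K_def)
  have MK: "M = 4 * K" by (simp add: M_def Mh_def)
  define P where "P = (\<Sum>m<Mh. monom (c (2*m+1)) (2*m+1))"
  have oddP: "odd_poly P"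
    unfolding odd_poly_def
  proof (intro allI impI)
    fix k :: nat assume "even k"
    thus "coeff P k = 0" unfolding P_def by (auto simp: coeff_sum coeff_monom intro!: sum.neutral)
  qed
  have polyP: "poly P x = (\<Sum>m<Mh. c (2*m+1) * x ^ (2*m+1))" for x
    unfolding P_def by (simp add: poly_sum poly_monom)
  have "\<bar>phi x - (\<Sum>m = 0..N+1. (deriv ^^ (2*m)) phi 0 / fact (2*m) * x ^ (2*m)) - poly P x\<bar>
        \<le> 2.3 * (2/3) ^ (N+2) * x ^ (2*N+4)" if x: "\<bar>x\<bar> \<le> 1/2" for x :: real
  proof -
    obtain t where t: "\<bar>t\<bar> \<le> \<bar>x\<bar>"
      and tay: "phi x = (\<Sum>m<M. (deriv ^^ m) phi 0 / fact m * x ^ m) + (deriv ^^ M) phi t / fact M * x ^ M"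
      using Maclaurin_bi_le[of "\<lambda>m. (deriv ^^ m) phi" phi M x] x phi_hd by fastforce
    have t1: "\<bar>t\<bar> < 1" using t x by simp
    define R where "R = (deriv ^^ M) phi t / fact M * x ^ M"
    have "(\<Sum>m<M. (deriv ^^ m) phi 0 / fact m * x ^ m) = (\<Sum>m<Mh. c (2*m) * x ^ (2*m)) + poly P x"
      unfolding M_def sum_even_odd polyP c_def ..
    also have "(\<Sum>m<Mh. c (2*m) * x ^ (2*m)) = (\<Sum>m<N+2. c (2*m) * x ^ (2*m)) + (\<Sum>m\<in>{N+2..<Mh}. c (2*m) * x ^ (2*m))"
      unfolding lessThan_atLeast0 by (rule sum.atLeastLessThan_concat[symmetric]) (auto simp: Mh_def K_def)
    also have "(\<Sum>m<N+2. c (2*m) * x ^ (2*m)) = (\<Sum>m = 0..N+1. (deriv ^^ (2*m)) phi 0 / fact (2*m) * x ^ (2*m))"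
      unfolding c_def by (rule sum.cong) auto
    finally have eq: "phi x - (\<Sum>m = 0..N+1. (deriv ^^ (2*m)) phi 0 / fact (2*m) * x ^ (2*m)) - poly P x
        = (\<Sum>m\<in>{N+2..<Mh}. c (2*m) * x ^ (2*m)) + R"
      using tay unfolding R_def by simp
    define z where "z = 4 * rho * \<bar>x\<bar>"
    have z0: "0 \<le> z" using rho_pos by (simp add: z_def)
    have z2: "z ^ 2 = 2/3 * x ^ 2"
      using four_rho_sq by (simp add: z_def power_mult_distrib)
    have zle: "z \<le> 40834/100000"
    proof -
      have "z \<le> 4 * rho * (1/2)" unfolding z_def using x rho_pos by (intro mult_left_mono) auto
      thus ?thesis using rho_bounds by linarith
    qed
    define W where "W = z ^ 2"
    have W0: "0 \<le> W" "W \<le> 1/6"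
    proof -
      show "0 \<le> W" by (simp add: W_def)
      have "\<bar>x\<bar> ^ 2 \<le> (1/2) ^ 2" by (rule power_mono) (use x in auto)
      hence "x ^ 2 \<le> (1/2) ^ 2" by simp
      thus "W \<le> 1/6" using z2 by (simp add: W_def power2_eq_square)
    qed
    have target: "2.3 * (2/3) ^ (N+2) * x ^ (2*N+4) = 2.3 * W ^ (N+2)"
    proof -
      have e: "2*N+4 = 2*(N+2)" by simp
      have "x ^ (2*N+4) = (x ^ 2) ^ (N+2)"
        by (simp only: e power_mult)
      hence "(2/3) ^ (N+2) * x ^ (2*N+4) = (2/3 * x ^ 2) ^ (N+2)"
        by (simp only: power_mult_distrib)
      also have "\<dots> = W ^ (N+2)" by (simp only: W_def z2)
      finally show ?thesis by simp
    qed
    have even_bd: "\<bar>\<Sum>m\<in>{N+2..<Mh}. c (2*m) * x ^ (2*m)\<bar> \<le> (1592/1000) * (W ^ (N+2) / (1 - W))"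
    proof -
      have "\<bar>\<Sum>m\<in>{N+2..<Mh}. c (2*m) * x ^ (2*m)\<bar> \<le> (\<Sum>m\<in>{N+2..<Mh}. \<bar>c (2*m) * x ^ (2*m)\<bar>)"
        by (rule sum_abs)
      also have "\<dots> \<le> (\<Sum>m\<in>{N+2..<Mh}. (1592/1000) * W ^ m)"
      proof (rule sum_mono)
        fix m assume m: "m \<in> {N+2..<Mh}"
        have "\<bar>c (2*m)\<bar> = \<bar>G (2*m) 0\<bar> / fact (2*m)"
          unfolding c_def using deriv_phi[of 0 "2*m"] by simp
        also have "\<dots> \<le> (1592/1000) * (4 * rho) ^ (2*m)"
          using m assms by (intro coef_bound) auto
        finally have "\<bar>c (2*m)\<bar> * \<bar>x\<bar> ^ (2*m) \<le> (1592/1000) * (4 * rho) ^ (2*m) * \<bar>x\<bar> ^ (2*m)"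
          by (intro mult_right_mono) auto
        also have "\<dots> = (1592/1000) * W ^ m"
          by (simp add: W_def z_def power_mult power_mult_distrib)
        finally show "\<bar>c (2*m) * x ^ (2*m)\<bar> \<le> (1592/1000) * W ^ m"
          by (simp add: abs_mult power_abs)
      qed
      also have "\<dots> = (1592/1000) * (\<Sum>m\<in>{N+2..<Mh}. W ^ m)" by (simp add: sum_distrib_left)
      also have "\<dots> \<le> (1592/1000) * (W ^ (N+2) / (1 - W))"
        using W0 by (intro mult_left_mono geom_bound) auto
      finally show ?thesis .
    qed
    have R_bd: "\<bar>R\<bar> \<le> 5 * ((31/10000) * W ^ (N+2))"
    proof -
      have "\<bar>R\<bar> = \<bar>G M t\<bar> / fact M * \<bar>x\<bar> ^ M"
        unfolding R_def using deriv_phi[OF t1, of M] by (simp add: abs_mult power_abs)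
      also have "\<dots> \<le> 5 * (z / (1 - z)) ^ M"
        unfolding z_def using lag_bound[OF t x, of M] by (simp add: M_def Mh_def K_def)
      also have "(z / (1 - z)) ^ M \<le> (31/10000) * z ^ K"
        unfolding MK using Q_bound[OF z0 zle K10] .
      also have "z ^ K = W ^ (N+2)"
      proof -
        have e: "K = 2*(N+2)" by (simp add: K_def)
        show ?thesis by (simp only: e power_mult W_def)
      qed
      finally show ?thesis by simp
    qed
    have "\<bar>(\<Sum>m\<in>{N+2..<Mh}. c (2*m) * x ^ (2*m)) + R\<bar> \<le> (1592/1000) * (W ^ (N+2) / (1 - W)) + 5 * ((31/10000) * W ^ (N+2))"
      using even_bd R_bd abs_triangle_ineq[of "\<Sum>m\<in>{N+2..<Mh}. c (2*m) * x ^ (2*m)" R] by linarith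
    also have "\<dots> \<le> 23/10 * W ^ (N+2)"
    proof -
      have Wp: "0 \<le> W ^ (N+2)" using W0 by simp
      have "1 / (1 - W) \<le> 6/5" using W0 by (simp add: field_simps)
      hence "W ^ (N+2) * (1 / (1 - W)) \<le> W ^ (N+2) * (6/5)" by (rule mult_left_mono[OF _ Wp])
      hence "W ^ (N+2) / (1 - W) \<le> W ^ (N+2) * (6/5)" by simp
      thus ?thesis using Wp by linarith
    qed
    finally show ?thesis using eq target by simp
  qed
  thus ?thesis using oddP by blast
qed

end
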